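(* Assume no two of $\bm u_1,\dots,\bm u_m$ are parallel. Let $\bm a,\bm b\in\mathbb{R}^m$ be such that $\mathcal{A}_{\bm a}$ and $\mathcal{A}_{\bm b}$ are normally equivalent. Then for each $i\in[m]$, the arrangements $\mathcal{A}_{\bm a}\setminus\{H_{\bm u_i,a_i}\}$ and $\mathcal{A}_{\bm b}\setminus\{H_{\bm u_i,b_i}\}$ are normally equivalent.
   Context: Fix nonzero $\bm u_1,\dots,\bm u_m\in\mathbb{R}^n$; $H_{\bm u,a}=\{\bm x:\langle\bm u,\bm x\rangle=a\}$; $\mathcal{A}_{\bm a}=\{H_{\bm u_i,a_i}:i\in[m]\}$. Faces of an arrangement: closures of the nonempty sets of points with a common sign vector; $\mathcal{F}(\mathcal{A})$ is the set of faces ordered by inclusion. For a nonempty convex polyhedron $P$: $h_P(\bm u)=\sup_{\bm x\in P}\langle\bm u,\bm x\rangle$, $N_P(\bm x)=\{\bm u:\langle\bm u,\bm x\rangle=h_P(\bm u)\}$, $N_P(G)=N_P(\bm x)$ for $\bm x\in\operatorname{relint}(G)$, normal fan $\mathcal{N}(P)=\{N_P(G)\}$; $P,Q$ normally equivalent iff $\mathcal{N}(P)=\mathcal{N}(Q)$. Arrangements $\mathcal{A},\mathcal{A}'$ in $\mathbb{R}^n$ are normally equivalent if there is an order-preserving bijection $\Psi:\mathcal{F}(\mathcal{A})\to\mathcal{F}(\mathcal{A}')$ with $F,\Psi(F)$ normally equivalent for all faces $F$. *)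

theory Defs
  imports "HOL-Analysis.Analysis"
begin

definition hyperplane :: "'a::euclidean_space \<Rightarrow> real \<Rightarrow> 'a set" where
  "hyperplane u a = {x. u \<bullet> x = a}"

text \<open>An arrangement is a finite set of hyperplanes, each given by its defining pair (u, a),
  i.e. the hyperplane H_{u,a}.  The sign vector of x records sgn(u.x - a) for each member.\<close>
definition sign_vector :: "('a::euclidean_space \<times> real) set \<Rightarrow> 'a \<Rightarrow> ('a \<times> real \<Rightarrow> real)" where
  "sign_vector A x = (\<lambda>p. if p \<in> A then sgn (fst p \<bullet> x - snd p) else 0)"

definition arr_faces :: "('a::euclidean_space \<times> real) set \<Rightarrow> 'a set set" where
  "arr_faces A = {closure {y. sign_vector A y = s} | s. {y. sign_vector A y = s} \<noteq> {}}"

text \<open>The arrangement A_a = {H_{u_i,a_i} : i in [m]}, with [m] rendered as {..<m}.\<close>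
definition arrangement :: "nat \<Rightarrow> (nat \<Rightarrow> 'a::euclidean_space) \<Rightarrow> (nat \<Rightarrow> real) \<Rightarrow> ('a \<times> real) set" where
  "arrangement m u a = (\<lambda>i. (u i, a i)) ` {..<m}"

text \<open>Support function h_P (extended-real valued, since P may be unbounded).\<close>
definition support_fun :: "'a::euclidean_space set \<Rightarrow> 'a \<Rightarrow> ereal" where
  "support_fun P u = (SUP x\<in>P. ereal (u \<bullet> x))"

definition normal_cone :: "'a::euclidean_space set \<Rightarrow> 'a \<Rightarrow> 'a set" where
  "normal_cone P x = {u. ereal (u \<bullet> x) = support_fun P u}"

definition normal_cone_face :: "'a::euclidean_space set \<Rightarrow> 'a set \<Rightarrow> 'a set" where
  "normal_cone_face P G = normal_cone P (SOME x. x \<in> rel_interior G)"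

definition normal_fan :: "'a::euclidean_space set \<Rightarrow> 'a set set" where
  "normal_fan P = {normal_cone_face P G | G. G face_of P \<and> G \<noteq> {}}"

definition normally_equivalent :: "'a::euclidean_space set \<Rightarrow> 'a set \<Rightarrow> bool" where
  "normally_equivalent P Q \<longleftrightarrow> normal_fan P = normal_fan Q"

definition arr_normally_equivalent ::
  "('a::euclidean_space \<times> real) set \<Rightarrow> ('a \<times> real) set \<Rightarrow> bool" where
  "arr_normally_equivalent A B \<longleftrightarrow>
     (\<exists>\<Psi>. bij_betw \<Psi> (arr_faces A) (arr_faces B)
        \<and> (\<forall>F\<in>arr_faces A. \<forall>G\<in>arr_faces A. F \<subseteq> G \<longrightarrow> \<Psi> F \<subseteq> \<Psi> G)
        \<and> (\<forall>F\<in>arr_faces A. normally_equivalent F (\<Psi> F)))"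

end

theory Submission
  imports Defs
begin

definition polar :: "'a::euclidean_space set \<Rightarrow> 'a set" where
  "polar C = {v. \<forall>d\<in>C. v \<bullet> d \<le> 0}"

definition sle :: "(nat \<Rightarrow> real) \<Rightarrow> (nat \<Rightarrow> real) \<Rightarrow> bool" where
  "sle s r \<longleftrightarrow> (\<forall>j. s j = 0 \<or> s j = r j)"

lemma sgn_mul: "sgn (v::real) * v = \<bar>v\<bar>" by (simp add: sgn_if)

lemma sle_refl: "sle s s" by (simp add: sle_def)
lemma sle_trans: "sle s r \<Longrightarrow> sle r q \<Longrightarrow> sle s q" unfolding sle_def by metis
lemma sle_antisym: "sle s r \<Longrightarrow> sle r s \<Longrightarrow> s = r" unfolding sle_def by (metis ext)

locale arr =
  fixes u :: "nat \<Rightarrow> 'a::euclidean_space" and J :: "nat set"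
  assumes finJ: "finite J"
    and nz: "\<And>j. j \<in> J \<Longrightarrow> u j \<noteq> 0"
    and np: "\<And>j k c. j \<in> J \<Longrightarrow> k \<in> J \<Longrightarrow> j \<noteq> k \<Longrightarrow> u j \<noteq> c *\<^sub>R u k"
begin

definition sv :: "(nat \<Rightarrow> real) \<Rightarrow> 'a \<Rightarrow> nat \<Rightarrow> real" where
  "sv a x = (\<lambda>j. if j \<in> J then sgn (u j \<bullet> x - a j) else 0)"

definition cov where "cov a = range (sv a)"

definition cell where "cell a s = {x. sv a x = s}"
definition fc where "fc a s = closure (cell a s)"
definition cf where
  "cf a s = {x. \<forall>j\<in>J. (s j = 0 \<longrightarrow> u j \<bullet> x = a j) \<and> (s j \<noteq> 0 \<longrightarrow> 0 \<le> s j * (u j \<bullet> x - a j))}"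
definition Tc where
  "Tc s r = {d. \<forall>j\<in>J. (s j = 0 \<longrightarrow> d \<bullet> u j = 0) \<and> (r j = 0 \<and> s j \<noteq> 0 \<longrightarrow> 0 \<le> s j * (d \<bullet> u j))}"

lemma sv_out: "j \<notin> J \<Longrightarrow> sv a x j = 0" by (simp add: sv_def)
lemma sv_in: "j \<in> J \<Longrightarrow> sv a x j = sgn (u j \<bullet> x - a j)" by (simp add: sv_def)

lemma cov_out: "s \<in> cov a \<Longrightarrow> j \<notin> J \<Longrightarrow> s j = 0" by (auto simp: cov_def sv_def)
lemma cov_vals: "s \<in> cov a \<Longrightarrow> s j = 0 \<or> s j = 1 \<or> s j = -1"
  by (cases "j \<in> J") (auto simp: cov_def sv_def sgn_if split: if_splits)

lemma closed_cf: "closed (cf a s)"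
proof -
  have "cf a s = (\<Inter>j\<in>J. {x. (s j = 0 \<longrightarrow> u j \<bullet> x = a j) \<and> (s j \<noteq> 0 \<longrightarrow> 0 \<le> s j * (u j \<bullet> x - a j))})"
    by (auto simp: cf_def)
  moreover have "closed {x. (s j = 0 \<longrightarrow> u j \<bullet> x = a j) \<and> (s j \<noteq> 0 \<longrightarrow> 0 \<le> s j * (u j \<bullet> x - a j))}" for j
  proof (cases "s j = 0")
    case True then show ?thesis by (simp add: closed_hyperplane)
  next
    case False
    have "{x. (s j = 0 \<longrightarrow> u j \<bullet> x = a j) \<and> (s j \<noteq> 0 \<longrightarrow> 0 \<le> s j * (u j \<bullet> x - a j))}
       = {x. 0 \<le> s j * (u j \<bullet> x - a j)}" using False by auto
    moreover have "closed {x. 0 \<le> s j * (u j \<bullet> x - a j)}"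
      by (intro closed_Collect_le continuous_intros)
    ultimately show ?thesis by simp
  qed
  ultimately show ?thesis by auto
qed

lemma cell_sub_cf: "cell a s \<subseteq> cf a s"
proof
  fix x assume "x \<in> cell a s"
  then have s: "s = sv a x" by (simp add: cell_def)
  show "x \<in> cf a s" unfolding cf_def
  proof (intro CollectI ballI conjI impI)
    fix j assume j: "j \<in> J"
    { assume "s j = 0" then show "u j \<bullet> x = a j" using s j by (simp add: sv_def sgn_eq_0_iff) }
    { assume "s j \<noteq> 0" then show "0 \<le> s j * (u j \<bullet> x - a j)" using s j
        by (simp add: sv_def sgn_mul) }
  qed
qed

lemma cf_strict: "x \<in> cell a s \<Longrightarrow> j \<in> J \<Longrightarrow> s j \<noteq> 0 \<Longrightarrow> 0 < s j * (u j \<bullet> x - a j)"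
  by (auto simp: cell_def sv_def sgn_mul)

lemma fc_eq_cf: assumes "s \<in> cov a" shows "fc a s = cf a s"
proof
  show "fc a s \<subseteq> cf a s" unfolding fc_def using cell_sub_cf closed_cf by (simp add: closure_minimal)
next
  obtain x where x: "x \<in> cell a s" using assms by (auto simp: cov_def cell_def)
  show "cf a s \<subseteq> fc a s"
  proof
    fix y assume y: "y \<in> cf a s"
    show "y \<in> fc a s"
    proof (cases "y = x")
      case True then show ?thesis using x closure_subset unfolding fc_def by blast
    next
      case False
      have "open_segment y x \<subseteq> cell a s"
      proof
        fix p assume "p \<in> open_segment y x"
        then obtain t where t: "0 < t" "t < 1" and p: "p = (1 - t) *\<^sub>R y + t *\<^sub>R x"
          by (auto simp: in_segment)
        have "sv a p j = s j" for j
        proof (cases "j \<in> J")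
          case False then show ?thesis using x by (auto simp: cell_def sv_def)
        next
          case j: True
          have up: "u j \<bullet> p - a j = (1 - t) * (u j \<bullet> y - a j) + t * (u j \<bullet> x - a j)"
            by (simp add: p inner_add_right algebra_simps)
          show ?thesis
          proof (cases "s j = 0")
            case True
            then have "u j \<bullet> y = a j" "u j \<bullet> x = a j" using y x j
              by (auto simp: cf_def cell_def sv_def sgn_eq_0_iff)
            then show ?thesis using True j up by (simp add: sv_def)
          next
            case False
            have h1: "0 \<le> s j * (u j \<bullet> y - a j)" using y j False by (auto simp: cf_def)
            have h2: "0 < s j * (u j \<bullet> x - a j)" using cf_strict[OF x j False] .
            have "s j * (u j \<bullet> p - a j) = (1 - t) * (s j * (u j \<bullet> y - a j)) + t * (s j * (u j \<bullet> x - a j))"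
              by (simp add: up algebra_simps)
            also have "\<dots> > 0" using h1 h2 t by (simp add: add_nonneg_pos)
            finally have pos: "s j * (u j \<bullet> p - a j) > 0" .
            have "s j = 1 \<or> s j = -1" using x j False by (auto simp: cell_def sv_def sgn_if split: if_splits)
            then show ?thesis using pos j by (auto simp: sv_def zero_less_mult_iff)
          qed
        qed
        then show "p \<in> cell a s" by (auto simp: cell_def)
      qed
      then have "closure (open_segment y x) \<subseteq> fc a s" unfolding fc_def by (rule closure_mono)
      then show ?thesis using False by auto
    qed
  qed
qed

lemma mem_fc: assumes "s \<in> cov a" shows "x \<in> fc a s \<longleftrightarrow> sle (sv a x) s"
proof -
  have "x \<in> cf a s \<longleftrightarrow> sle (sv a x) s"
    unfolding cf_def sle_def
  proof safe
    fix j assume h: "\<forall>j\<in>J. (s j = 0 \<longrightarrow> u j \<bullet> x = a j) \<and> (s j \<noteq> 0 \<longrightarrow> 0 \<le> s j * (u j \<bullet> x - a j))"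
      and ne: "sv a x j \<noteq> s j"
    show "sv a x j = 0"
    proof (cases "j \<in> J")
      case False then show ?thesis by (simp add: sv_def)
    next
      case True
      then show ?thesis using h ne cov_vals[OF assms, of j]
        by (auto simp: sv_def sgn_if zero_le_mult_iff split: if_splits)
    qed
  next
    fix j assume h: "\<forall>j. sv a x j = 0 \<or> sv a x j = s j" and "j \<in> J" "s j = 0"
    then show "u j \<bullet> x = a j" by (metis sv_def sgn_eq_0_iff right_minus_eq)
  next
    fix j assume h: "\<forall>j. sv a x j = 0 \<or> sv a x j = s j" and j: "j \<in> J" "s j \<noteq> 0"
    then have "sgn (u j \<bullet> x - a j) = 0 \<or> sgn (u j \<bullet> x - a j) = s j" by (metis sv_def)
    then show "0 \<le> s j * (u j \<bullet> x - a j)"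
      using sgn_mul[of "u j \<bullet> x - a j"] by (auto simp: sgn_eq_0_iff)
  qed
  then show ?thesis using fc_eq_cf[OF assms] by simp
qed

lemma sv_in_fc: "sv a x \<in> cov a \<Longrightarrow> x \<in> fc a (sv a x)"
  using mem_fc sle_refl by blast

lemma fc_sub: assumes "s \<in> cov a" "r \<in> cov a" shows "fc a s \<subseteq> fc a r \<longleftrightarrow> sle s r"
proof
  assume h: "fc a s \<subseteq> fc a r"
  obtain x where x: "sv a x = s" using assms by (auto simp: cov_def)
  have "x \<in> fc a s" using x assms mem_fc sle_refl by blast
  then show "sle s r" using h mem_fc[OF assms(2)] x by auto
next
  assume "sle s r" then show "fc a s \<subseteq> fc a r" using mem_fc assms sle_trans by blast
qed

lemma fc_inj: "s \<in> cov a \<Longrightarrow> r \<in> cov a \<Longrightarrow> fc a s = fc a r \<Longrightarrow> s = r"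
proof -
  assume h: "s \<in> cov a" "r \<in> cov a" "fc a s = fc a r"
  have "sle s r" using fc_sub[OF h(1,2)] h(3) by simp
  moreover have "sle r s" using fc_sub[OF h(2,1)] h(3) by simp
  ultimately show "s = r" by (rule sle_antisym)
qed


lemma Stab: "eventually (\<lambda>\<epsilon>. \<forall>j\<in>J. sv a x j \<noteq> 0 \<longrightarrow> sv a (x + \<epsilon> *\<^sub>R v) j = sv a x j) (at_right (0::real))"
proof (rule eventually_ball_finite[OF finJ], intro ballI)
  fix j assume j: "j \<in> J"
  have lim: "((\<lambda>\<epsilon>. u j \<bullet> (x + \<epsilon> *\<^sub>R v) - a j) \<longlongrightarrow> u j \<bullet> (x + 0 *\<^sub>R v) - a j) (at_right (0::real))"
    by (intro tendsto_intros)
  then have lim: "((\<lambda>\<epsilon>. u j \<bullet> (x + \<epsilon> *\<^sub>R v) - a j) \<longlongrightarrow> u j \<bullet> x - a j) (at_right (0::real))"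
    by simp
  show "eventually (\<lambda>\<epsilon>. sv a x j \<noteq> 0 \<longrightarrow> sv a (x + \<epsilon> *\<^sub>R v) j = sv a x j) (at_right 0)"
  proof (cases "u j \<bullet> x - a j > 0")
    case True
    show ?thesis using order_tendstoD(1)[OF lim True]
      by eventually_elim (use True j in \<open>simp add: sv_def\<close>)
  next
    case False
    show ?thesis
    proof (cases "u j \<bullet> x - a j < 0")
      case True
      show ?thesis using order_tendstoD(2)[OF lim True]
        by eventually_elim (use True j in \<open>simp add: sv_def\<close>)
    next
      case False2: False
      then have "u j \<bullet> x - a j = 0" using False by linarith
      then show ?thesis using j by (simp add: sv_def)
    qed
  qed
qed

end

lemma ev_ex: assumes "eventually P (at_right (0::real))" shows "\<exists>e>0. P e"
proof -
  have "eventually (\<lambda>e. e > 0 \<and> P e) (at_right (0::real))"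
    using eventually_conj[OF eventually_at_right_less assms] by simp
  from eventually_happens[OF this] show ?thesis using trivial_limit_at_right_real[of 0]
    unfolding trivial_limit_def by blast
qed

lemma nc_iff: assumes "x \<in> P"
  shows "v \<in> normal_cone P x \<longleftrightarrow> (\<forall>y\<in>P. v \<bullet> y \<le> v \<bullet> x)"
proof
  assume h: "v \<in> normal_cone P x"
  show "\<forall>y\<in>P. v \<bullet> y \<le> v \<bullet> x"
  proof
    fix y assume "y \<in> P"
    then have "ereal (v \<bullet> y) \<le> support_fun P v" unfolding support_fun_def by (rule SUP_upper)
    then have "ereal (v \<bullet> y) \<le> ereal (v \<bullet> x)" using h by (simp add: normal_cone_def)
    then show "v \<bullet> y \<le> v \<bullet> x" by simp
  qed
next
  assume h: "\<forall>y\<in>P. v \<bullet> y \<le> v \<bullet> x"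
  have "support_fun P v \<le> ereal (v \<bullet> x)" unfolding support_fun_def
    by (rule SUP_least) (use h in auto)
  moreover have "ereal (v \<bullet> x) \<le> support_fun P v" unfolding support_fun_def
    using assms by (rule SUP_upper)
  ultimately show "v \<in> normal_cone P x" by (simp add: normal_cone_def)
qed

context arr begin

lemma convex_cf: "convex (cf a s)"
  unfolding convex_alt
proof (intro ballI allI impI)
  fix x y and t::real assume x: "x \<in> cf a s" and y: "y \<in> cf a s" and t: "0 \<le> t \<and> t \<le> 1"
  show "(1 - t) *\<^sub>R x + t *\<^sub>R y \<in> cf a s" unfolding cf_def
  proof (intro CollectI ballI conjI impI)
    fix j assume j: "j \<in> J"
    have e: "u j \<bullet> ((1 - t) *\<^sub>R x + t *\<^sub>R y) - a j = (1-t) * (u j \<bullet> x - a j) + t * (u j \<bullet> y - a j)"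
      by (simp add: inner_add_right algebra_simps)
    { assume "s j = 0" then show "u j \<bullet> ((1 - t) *\<^sub>R x + t *\<^sub>R y) = a j"
        using x y j by (auto simp: cf_def inner_add_right algebra_simps) }
    { assume "s j \<noteq> 0"
      then have "0 \<le> s j * (u j \<bullet> x - a j)" "0 \<le> s j * (u j \<bullet> y - a j)" using x y j by (auto simp: cf_def)
      then have "0 \<le> (1-t) * (s j * (u j \<bullet> x - a j)) + t * (s j * (u j \<bullet> y - a j))"
        using t by (metis add_nonneg_nonneg diff_ge_0_iff_ge mult_nonneg_nonneg)
      then show "0 \<le> s j * (u j \<bullet> ((1 - t) *\<^sub>R x + t *\<^sub>R y) - a j)"
        by (simp add: e algebra_simps) }
  qed
qed

lemma convex_fc: "s \<in> cov a \<Longrightarrow> convex (fc a s)"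
  using fc_eq_cf convex_cf by simp

lemma nc_fc: assumes s: "s \<in> cov a" and x: "x \<in> fc a s"
  shows "normal_cone (fc a s) x = polar (Tc s (sv a x))"
proof -
  have xcf: "x \<in> cf a s" using x fc_eq_cf[OF s] by simp
  have sl: "sle (sv a x) s" using x mem_fc[OF s] by simp
  show ?thesis
  proof (intro set_eqI iffI)
    fix v assume v: "v \<in> normal_cone (fc a s) x"
    then have v': "\<forall>y\<in>cf a s. v \<bullet> y \<le> v \<bullet> x" using nc_iff[OF x] fc_eq_cf[OF s] by simp
    show "v \<in> polar (Tc s (sv a x))" unfolding polar_def
    proof (intro CollectI ballI)
      fix d assume d: "d \<in> Tc s (sv a x)"
      obtain e where e: "e > 0" and he: "\<forall>j\<in>J. sv a x j \<noteq> 0 \<longrightarrow> sv a (x + e *\<^sub>R d) j = sv a x j"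
        using ev_ex[OF Stab] by blast
      have "x + e *\<^sub>R d \<in> cf a s" unfolding cf_def
      proof (intro CollectI ballI conjI impI)
        fix j assume j: "j \<in> J"
        { assume sj: "s j = 0"
          then have "d \<bullet> u j = 0" using d j by (auto simp: Tc_def)
          moreover have "u j \<bullet> x = a j" using xcf sj j by (auto simp: cf_def)
          ultimately show "u j \<bullet> (x + e *\<^sub>R d) = a j" by (simp add: inner_add_right inner_commute) }
        { assume sj: "s j \<noteq> 0"
          show "0 \<le> s j * (u j \<bullet> (x + e *\<^sub>R d) - a j)"
          proof (cases "sv a x j = 0")
            case True
            then have "u j \<bullet> x = a j" using j by (simp add: sv_def sgn_eq_0_iff)
            moreover have "0 \<le> s j * (d \<bullet> u j)" using d j sj True by (auto simp: Tc_def)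
            ultimately show ?thesis using e
              by (simp add: inner_add_right inner_commute algebra_simps)
          next
            case False
            then have eq: "sv a x j = s j" using sl by (auto simp: sle_def)
            have "sgn (u j \<bullet> (x + e *\<^sub>R d) - a j) = s j" using he j False eq by (simp add: sv_def)
            then have "s j * (u j \<bullet> (x + e *\<^sub>R d) - a j) = \<bar>u j \<bullet> (x + e *\<^sub>R d) - a j\<bar>"
              using sgn_mul by metis
            then show ?thesis by simp
          qed }
      qed
      then have "v \<bullet> (x + e *\<^sub>R d) \<le> v \<bullet> x" using v' by blast
      then have "e * (v \<bullet> d) \<le> 0" by (simp add: inner_add_right)
      then show "v \<bullet> d \<le> 0" using e by (simp add: mult_le_0_iff)
    qed
  next
    fix v assume v: "v \<in> polar (Tc s (sv a x))"
    have "\<forall>y\<in>fc a s. v \<bullet> y \<le> v \<bullet> x"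
    proof
      fix y assume "y \<in> fc a s"
      then have ycf: "y \<in> cf a s" using fc_eq_cf[OF s] by simp
      have "y - x \<in> Tc s (sv a x)" unfolding Tc_def
      proof (intro CollectI ballI conjI impI)
        fix j assume j: "j \<in> J"
        { assume "s j = 0"
          then have "u j \<bullet> y = a j" "u j \<bullet> x = a j" using xcf ycf j by (auto simp: cf_def)
          then show "(y - x) \<bullet> u j = 0" by (metis inner_commute inner_diff_left diff_self) }
        { assume h: "sv a x j = 0 \<and> s j \<noteq> 0"
          then have "u j \<bullet> x = a j" using j by (simp add: sv_def sgn_eq_0_iff)
          moreover have "0 \<le> s j * (u j \<bullet> y - a j)" using ycf j h by (auto simp: cf_def)
          moreover have "(y - x) \<bullet> u j = u j \<bullet> y - u j \<bullet> x" by (metis inner_commute inner_diff_left)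
          ultimately show "0 \<le> s j * ((y - x) \<bullet> u j)" by simp }
      qed
      then have "v \<bullet> (y - x) \<le> 0" using v by (auto simp: polar_def)
      then show "v \<bullet> y \<le> v \<bullet> x" by (simp add: inner_diff_right)
    qed
    then show "v \<in> normal_cone (fc a s) x" using nc_iff[OF x] by simp
  qed
qed


lemma face_fc: assumes r: "r \<in> cov a" and s: "s \<in> cov a" and rs: "sle r s"
  shows "fc a r face_of fc a s"
proof -
  define K where "K = {j\<in>J. r j = 0 \<and> s j \<noteq> 0}"
  have finK: "finite K" using finJ by (simp add: K_def)
  define g where "g = (\<Sum>j\<in>K. (- s j) *\<^sub>R u j)"
  define b where "b = (\<Sum>j\<in>K. - s j * a j)"
  have gx: "g \<bullet> x - b = (\<Sum>j\<in>K. - (s j * (u j \<bullet> x - a j)))" for x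
    unfolding g_def b_def by (simp add: inner_sum_left sum_subtractf[symmetric] algebra_simps)
  have nn: "x \<in> cf a s \<Longrightarrow> j \<in> K \<Longrightarrow> 0 \<le> s j * (u j \<bullet> x - a j)" for x j
    by (auto simp: cf_def K_def)
  have le: "g \<bullet> x \<le> b" if "x \<in> fc a s" for x
  proof -
    have "x \<in> cf a s" using that fc_eq_cf[OF s] by simp
    then have "(\<Sum>j\<in>K. - (s j * (u j \<bullet> x - a j))) \<le> 0"
      by (intro sum_nonpos) (use nn in auto)
    then show ?thesis using gx[of x] by simp
  qed
  have eq: "fc a s \<inter> {x. g \<bullet> x = b} = fc a r"
  proof (intro set_eqI iffI)
    fix x assume "x \<in> fc a s \<inter> {x. g \<bullet> x = b}"
    then have xs: "x \<in> cf a s" and "g \<bullet> x = b" using fc_eq_cf[OF s] by auto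
    then have "(\<Sum>j\<in>K. - (s j * (u j \<bullet> x - a j))) = 0" using gx[of x] by linarith
    then have "- (\<Sum>j\<in>K. s j * (u j \<bullet> x - a j)) = 0" by (simp only: sum_negf)
    then have "(\<Sum>j\<in>K. s j * (u j \<bullet> x - a j)) = 0" by linarith
    moreover have "\<And>j. j \<in> K \<Longrightarrow> 0 \<le> s j * (u j \<bullet> x - a j)" using nn[OF xs] .
    ultimately have z: "\<forall>j\<in>K. s j * (u j \<bullet> x - a j) = 0"
      using sum_nonneg_eq_0_iff[OF finK, of "\<lambda>j. s j * (u j \<bullet> x - a j)"] by simp
    have "x \<in> cf a r" unfolding cf_def
    proof (intro CollectI ballI conjI impI)
      fix j assume j: "j \<in> J"
      { assume rj: "r j = 0"
        show "u j \<bullet> x = a j"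
        proof (cases "s j = 0")
          case True then show ?thesis using xs j by (auto simp: cf_def)
        next
          case False then have "j \<in> K" using j rj by (simp add: K_def)
          then show ?thesis using z False by auto
        qed }
      { assume rj: "r j \<noteq> 0"
        then have "r j = s j" using rs by (auto simp: sle_def)
        then show "0 \<le> r j * (u j \<bullet> x - a j)" using xs j rj by (auto simp: cf_def) }
    qed
    then show "x \<in> fc a r" using fc_eq_cf[OF r] by simp
  next
    fix x assume x: "x \<in> fc a r"
    then have "x \<in> fc a s" using fc_sub[OF r s] rs by auto
    moreover have "x \<in> cf a r" using x fc_eq_cf[OF r] by simp
    then have "\<forall>j\<in>K. s j * (u j \<bullet> x - a j) = 0" by (auto simp: cf_def K_def)
    then have "(\<Sum>j\<in>K. - (s j * (u j \<bullet> x - a j))) = 0" by (intro sum.neutral) auto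
    then have "g \<bullet> x = b" using gx[of x] by linarith
    ultimately show "x \<in> fc a s \<inter> {x. g \<bullet> x = b}" by simp
  qed
  have "(fc a s \<inter> {x. g \<bullet> x = b}) face_of fc a s"
    by (rule face_of_Int_supporting_hyperplane_le) (use convex_fc[OF s] le in auto)
  then show ?thesis using eq by simp
qed

lemma relint_sv: assumes r: "r \<in> cov a" and y: "y \<in> rel_interior (fc a r)"
  shows "sv a y = r"
proof (rule ccontr)
  assume ne: "sv a y \<noteq> r"
  have yf: "y \<in> fc a r" using y rel_interior_subset by blast
  then have sl: "sle (sv a y) r" using mem_fc[OF r] by simp
  obtain j where j: "sv a y j \<noteq> r j" using ne by blast
  then have svj: "sv a y j = 0" and rj: "r j \<noteq> 0" using sl by (auto simp: sle_def)
  have jJ: "j \<in> J" using rj cov_out[OF r] by blast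
  have uy: "u j \<bullet> y = a j" using svj jJ by (simp add: sv_def sgn_eq_0_iff)
  obtain x0 where x0: "sv a x0 = r" using r by (auto simp: cov_def)
  have x0f: "x0 \<in> fc a r" using x0 r mem_fc sle_refl by blast
  obtain e where e: "e > 0" and be: "ball y e \<inter> affine hull (fc a r) \<subseteq> fc a r"
    using y mem_rel_interior_ball by blast
  have yx: "y \<noteq> x0" using x0 ne by auto
  define d where "d = e / (2 * norm (y - x0))"
  have dpos: "d > 0" using e yx by (simp add: d_def)
  define q where "q = (1 + d) *\<^sub>R y + (- d) *\<^sub>R x0"
  have "q \<in> affine hull (fc a r)"
    unfolding q_def by (rule mem_affine[OF affine_affine_hull]) (use yf x0f hull_inc in auto)
  moreover have "dist y q < e"
  proof -
    have "y - q = d *\<^sub>R (x0 - y)" by (simp add: q_def algebra_simps)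
    then have "dist y q = d * norm (y - x0)" using dpos by (simp add: dist_norm norm_minus_commute)
    also have "\<dots> = e / 2" using yx by (simp add: d_def)
    finally show ?thesis using e by simp
  qed
  ultimately have "q \<in> fc a r" using be by auto
  then have "sle (sv a q) r" using mem_fc[OF r] by simp
  moreover have "u j \<bullet> q - a j = - d * (u j \<bullet> x0 - a j)"
    using uy by (simp add: q_def inner_add_right algebra_simps)
  then have "sv a q j = - r j" using jJ x0 dpos by (auto simp: sv_def sgn_mult)
  ultimately have "sv a q j = 0 \<or> sv a q j = r j" "sv a q j = - r j" unfolding sle_def by blast+
  then show False using rj by linarith
qed

lemma fan_fc: assumes s: "s \<in> cov a"
  shows "normal_fan (fc a s) = {polar (Tc s r) | r. r \<in> cov a \<and> sle r s}"
proof (intro set_eqI iffI)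
  fix C assume "C \<in> normal_fan (fc a s)"
  then obtain G where G: "G face_of fc a s" "G \<noteq> {}" and C: "C = normal_cone_face (fc a s) G"
    by (auto simp: normal_fan_def)
  have "rel_interior G \<noteq> {}" using G face_of_imp_convex rel_interior_eq_empty by blast
  then have y: "(SOME y. y \<in> rel_interior G) \<in> rel_interior G" by (metis ex_in_conv someI_ex)
  define y where "y = (SOME y. y \<in> rel_interior G)"
  have yf: "y \<in> fc a s" using y G(1) rel_interior_subset face_of_imp_subset unfolding y_def by blast
  have "C = polar (Tc s (sv a y))" using C nc_fc[OF s yf] by (simp add: normal_cone_face_def y_def)
  moreover have "sv a y \<in> cov a" by (simp add: cov_def)
  moreover have "sle (sv a y) s" using yf mem_fc[OF s] by simp
  ultimately show "C \<in> {polar (Tc s r) | r. r \<in> cov a \<and> sle r s}" by blast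
next
  fix C assume "C \<in> {polar (Tc s r) | r. r \<in> cov a \<and> sle r s}"
  then obtain r where r: "r \<in> cov a" "sle r s" and C: "C = polar (Tc s r)" by blast
  have G: "fc a r face_of fc a s" using face_fc[OF r(1) s r(2)] .
  obtain x0 where "sv a x0 = r" using r(1) by (auto simp: cov_def)
  then have "x0 \<in> fc a r" using r(1) mem_fc sle_refl by blast
  then have ne: "fc a r \<noteq> {}" by blast
  have "rel_interior (fc a r) \<noteq> {}" using ne convex_fc[OF r(1)] rel_interior_eq_empty by blast
  then have y: "(SOME y. y \<in> rel_interior (fc a r)) \<in> rel_interior (fc a r)" by (metis ex_in_conv someI_ex)
  define y where "y = (SOME y. y \<in> rel_interior (fc a r))"
  have yr: "sv a y = r" using relint_sv[OF r(1)] y unfolding y_def by blast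
  have yf: "y \<in> fc a s" using y G rel_interior_subset face_of_imp_subset unfolding y_def by blast
  have "normal_cone_face (fc a s) (fc a r) = C"
    using nc_fc[OF s yf] yr C by (simp add: normal_cone_face_def y_def)
  then show "C \<in> normal_fan (fc a s)" using G ne unfolding normal_fan_def by blast
qed

end


context arr begin

lemma sign_vector_eq: "sign_vector ((\<lambda>j. (u j, a j)) ` J) x = sign_vector ((\<lambda>j. (u j, a j)) ` J) y
   \<longleftrightarrow> sv a x = sv a y"
proof
  assume h: "sign_vector ((\<lambda>j. (u j, a j)) ` J) x = sign_vector ((\<lambda>j. (u j, a j)) ` J) y"
  show "sv a x = sv a y"
  proof
    fix j show "sv a x j = sv a y j"
    proof (cases "j \<in> J")
      case True
      then have "sign_vector ((\<lambda>j. (u j, a j)) ` J) x (u j, a j) = sign_vector ((\<lambda>j. (u j, a j)) ` J) y (u j, a j)"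
        using h by simp
      then show ?thesis using True by (simp add: sign_vector_def sv_def)
    qed (simp add: sv_def)
  qed
next
  assume h: "sv a x = sv a y"
  show "sign_vector ((\<lambda>j. (u j, a j)) ` J) x = sign_vector ((\<lambda>j. (u j, a j)) ` J) y"
  proof
    fix p show "sign_vector ((\<lambda>j. (u j, a j)) ` J) x p = sign_vector ((\<lambda>j. (u j, a j)) ` J) y p"
    proof (cases "p \<in> (\<lambda>j. (u j, a j)) ` J")
      case True
      then obtain j where j: "j \<in> J" "p = (u j, a j)" by blast
      have "sv a x j = sv a y j" using h by simp
      then show ?thesis using j by (simp add: sign_vector_def sv_def)
    qed (simp add: sign_vector_def)
  qed
qed

lemma arr_faces_eq: "arr_faces ((\<lambda>j. (u j, a j)) ` J) = fc a ` cov a"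
proof (intro set_eqI iffI)
  fix F assume "F \<in> arr_faces ((\<lambda>j. (u j, a j)) ` J)"
  then obtain s where F: "F = closure {y. sign_vector ((\<lambda>j. (u j, a j)) ` J) y = s}"
    and ne: "{y. sign_vector ((\<lambda>j. (u j, a j)) ` J) y = s} \<noteq> {}"
    by (auto simp: arr_faces_def)
  then obtain x where x: "sign_vector ((\<lambda>j. (u j, a j)) ` J) x = s" by blast
  have "{y. sign_vector ((\<lambda>j. (u j, a j)) ` J) y = s} = cell a (sv a x)"
    using sign_vector_eq x by (auto simp: cell_def)
  then have "F = fc a (sv a x)" using F by (simp add: fc_def)
  then show "F \<in> fc a ` cov a" by (simp add: cov_def)
next
  fix F assume "F \<in> fc a ` cov a"
  then obtain x where F: "F = fc a (sv a x)" by (auto simp: cov_def)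
  have e: "{y. sign_vector ((\<lambda>j. (u j, a j)) ` J) y = sign_vector ((\<lambda>j. (u j, a j)) ` J) x} = cell a (sv a x)"
    using sign_vector_eq by (auto simp: cell_def)
  then have "F = closure {y. sign_vector ((\<lambda>j. (u j, a j)) ` J) y = sign_vector ((\<lambda>j. (u j, a j)) ` J) x}"
    using F by (simp add: fc_def)
  moreover have "{y. sign_vector ((\<lambda>j. (u j, a j)) ` J) y = sign_vector ((\<lambda>j. (u j, a j)) ` J) x} \<noteq> {}"
    by blast
  ultimately show "F \<in> arr_faces ((\<lambda>j. (u j, a j)) ` J)" unfolding arr_faces_def by blast
qed

lemma fc_inj_on: "inj_on (fc a) (cov a)"
  using fc_inj by (meson inj_onI)

lemma transfer:
  assumes eq: "cov a = cov b"
  shows "arr_normally_equivalent ((\<lambda>j. (u j, a j)) ` J) ((\<lambda>j. (u j, b j)) ` J)"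
proof -
  define \<Psi> where "\<Psi> = (\<lambda>F. fc b (inv_into (cov a) (fc a) F))"
  have bij1: "bij_betw (inv_into (cov a) (fc a)) (fc a ` cov a) (cov a)"
    by (rule bij_betw_inv_into) (simp add: bij_betw_def fc_inj_on)
  have bij2: "bij_betw (fc b) (cov a) (fc b ` cov b)"
    using fc_inj_on[of b] eq by (simp add: bij_betw_def)
  have bij: "bij_betw \<Psi> (fc a ` cov a) (fc b ` cov b)"
    unfolding \<Psi>_def using bij_betw_trans[OF bij1 bij2] by (simp add: comp_def)
  have ps: "\<Psi> (fc a s) = fc b s" if "s \<in> cov a" for s
    using that fc_inj_on by (simp add: \<Psi>_def)
  show ?thesis unfolding arr_normally_equivalent_def arr_faces_eq
  proof (intro exI conjI ballI impI)
    show "bij_betw \<Psi> (fc a ` cov a) (fc b ` cov b)" by (rule bij)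
  next
    fix F G assume F: "F \<in> fc a ` cov a" and G: "G \<in> fc a ` cov a" and FG: "F \<subseteq> G"
    obtain s r where s: "s \<in> cov a" "F = fc a s" and r: "r \<in> cov a" "G = fc a r" using F G by blast
    have "sle s r" using fc_sub[OF s(1) r(1)] FG s r by simp
    then show "\<Psi> F \<subseteq> \<Psi> G" using s r ps fc_sub[of s b r] eq by simp
  next
    fix F assume F: "F \<in> fc a ` cov a"
    obtain s where s: "s \<in> cov a" "F = fc a s" using F by blast
    have "normal_fan (fc a s) = normal_fan (fc b s)"
      using fan_fc[OF s(1)] fan_fc[of s b] s(1) eq by simp
    then show "normally_equivalent F (\<Psi> F)" using s ps by (simp add: normally_equivalent_def)
  qed
qed

end

lemma generic:
  fixes v :: "'a::euclidean_space"
  assumes "finite S" "\<forall>w\<in>S. \<exists>e. e \<bullet> v = 0 \<and> e \<bullet> w \<noteq> 0"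
  shows "\<exists>d. d \<bullet> v = 0 \<and> (\<forall>w\<in>S. d \<bullet> w \<noteq> 0)"
  using assms
proof (induction S rule: finite_induct)
  case empty then show ?case by (intro exI[of _ 0]) simp
next
  case (insert w S)
  then obtain d where d: "d \<bullet> v = 0" "\<forall>w\<in>S. d \<bullet> w \<noteq> 0" by auto
  obtain e where e: "e \<bullet> v = 0" "e \<bullet> w \<noteq> 0" using insert.prems by auto
  define B where "B = (\<lambda>w'. - (d \<bullet> w') / (e \<bullet> w')) ` (insert w S)"
  have "finite B" using insert.hyps by (simp add: B_def)
  then obtain c where c: "c \<notin> B" using ex_new_if_finite[of B] infinite_UNIV_char_0 by auto
  have "(d + c *\<^sub>R e) \<bullet> w' \<noteq> 0" if w': "w' \<in> insert w S" for w'
  proof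
    assume z: "(d + c *\<^sub>R e) \<bullet> w' = 0"
    then have z': "d \<bullet> w' + c * (e \<bullet> w') = 0" by (simp add: inner_add_left)
    show False
    proof (cases "e \<bullet> w' = 0")
      case True
      then have "w' \<noteq> w" using e by auto
      then have "w' \<in> S" using w' by auto
      then show False using d z' True by auto
    next
      case False
      then have "c = - (d \<bullet> w') / (e \<bullet> w')" using z' by (simp add: field_simps)
      then show False using c w' by (auto simp: B_def)
    qed
  qed
  moreover have "(d + c *\<^sub>R e) \<bullet> v = 0" using d e by (simp add: inner_add_left)
  ultimately show ?case by blast
qed

lemma ev_neq: "eventually (\<lambda>e. e \<noteq> c) (at_right (0::real))"
proof (cases "c > 0")
  case True
  show ?thesis using eventually_at_right_real[OF True] by eventually_elim auto
next
  case False
  show ?thesis using eventually_at_right_less[of 0] by eventually_elim (use False in auto)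
qed

context arr begin

lemma avoid: assumes "\<forall>k\<in>K. d \<bullet> u k \<noteq> 0" "finite K"
  shows "eventually (\<lambda>e. \<forall>k\<in>K. u k \<bullet> (z + e *\<^sub>R d) \<noteq> a k) (at_right (0::real))"
proof (rule eventually_ball_finite[OF assms(2)], intro ballI)
  fix k assume k: "k \<in> K"
  show "eventually (\<lambda>e. u k \<bullet> (z + e *\<^sub>R d) \<noteq> a k) (at_right 0)"
    using ev_neq[of "(a k - u k \<bullet> z) / (d \<bullet> u k)"]
  proof eventually_elim
    case (elim e)
    show ?case
    proof
      assume "u k \<bullet> (z + e *\<^sub>R d) = a k"
      then have "u k \<bullet> z + e * (d \<bullet> u k) = a k" by (simp add: inner_add_right inner_commute)
      then have "e = (a k - u k \<bullet> z) / (d \<bullet> u k)" using assms(1) k by (simp add: field_simps)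
      then show False using elim by simp
    qed
  qed
qed

lemma pert: "eventually (\<lambda>e. sv a (x + e *\<^sub>R v) =
   (\<lambda>j. if j \<in> J then (if sv a x j \<noteq> 0 then sv a x j else sgn (u j \<bullet> v)) else 0)) (at_right (0::real))"
  using eventually_conj[OF Stab[of a x v] eventually_at_right_less[of 0]]
proof eventually_elim
  case (elim e)
  show ?case
  proof
    fix j show "sv a (x + e *\<^sub>R v) j = (if j \<in> J then (if sv a x j \<noteq> 0 then sv a x j else sgn (u j \<bullet> v)) else 0)"
    proof (cases "j \<in> J")
      case True
      show ?thesis
      proof (cases "sv a x j = 0")
        case z: True
        then have "u j \<bullet> x = a j" using True by (simp add: sv_def sgn_eq_0_iff)
        then have "u j \<bullet> (x + e *\<^sub>R v) - a j = e * (u j \<bullet> v)" by (simp add: inner_add_right)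
        then show ?thesis using True z elim by (simp add: sv_def sgn_mult)
      next
        case False then show ?thesis using elim True by simp
      qed
    qed (simp add: sv_def)
  qed
qed


definition Zs where "Zs s = {j\<in>J. s j = 0}"

lemma sgn_pm: "t = 1 \<or> t = -1 \<Longrightarrow> 0 < t * (v::real) \<Longrightarrow> sgn v = t"
  by (auto simp: sgn_if zero_less_mult_iff)

lemma cov_pm: "s \<in> cov a \<Longrightarrow> j \<in> J \<Longrightarrow> s j \<noteq> 0 \<Longrightarrow> s j = 1 \<or> s j = -1"
  using cov_vals[of s a j] by auto

lemma finite_cov: "finite (cov a)"
proof -
  have "inj_on (\<lambda>s. restrict s J) (cov a)"
  proof (rule inj_onI)
    fix s r assume s: "s \<in> cov a" and r: "r \<in> cov a" and e: "restrict s J = restrict r J"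
    show "s = r"
    proof
      fix j show "s j = r j"
        using e cov_out[OF s, of j] cov_out[OF r, of j] by (cases "j \<in> J") (auto dest: fun_cong[of _ _ j])
    qed
  qed
  moreover have "(\<lambda>s. restrict s J) ` cov a \<subseteq> PiE J (\<lambda>_. {-1, 0, 1})"
  proof
    fix f assume "f \<in> (\<lambda>s. restrict s J) ` cov a"
    then obtain s where s: "s \<in> cov a" "f = restrict s J" by blast
    show "f \<in> PiE J (\<lambda>_. {-1, 0, 1})" using cov_vals[OF s(1)] s(2) by (auto simp: PiE_def)
  qed
  moreover have "finite (PiE J (\<lambda>_. {-1, 0, 1::real}))" using finJ by (simp add: finite_PiE)
  ultimately show ?thesis using finite_imageD finite_subset by metis
qed

lemma proj_witness: assumes "j \<in> J" "k \<in> J" "j \<noteq> k" shows "\<exists>e. e \<bullet> u k = 0 \<and> e \<bullet> u j \<noteq> 0"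
proof -
  define e where "e = u j - ((u j \<bullet> u k) / (u k \<bullet> u k)) *\<^sub>R u k"
  have uk: "u k \<bullet> u k \<noteq> 0" using nz[OF assms(2)] by simp
  have e1: "e \<bullet> u k = 0" using uk by (simp add: e_def inner_diff_left)
  have "e \<noteq> 0" using np[OF assms(1,2,3), of "(u j \<bullet> u k) / (u k \<bullet> u k)"] by (auto simp: e_def)
  moreover have "e \<bullet> u j = e \<bullet> e"
  proof -
    have eq: "u j = e + ((u j \<bullet> u k) / (u k \<bullet> u k)) *\<^sub>R u k" by (simp add: e_def)
    have "e \<bullet> u j = e \<bullet> e + ((u j \<bullet> u k) / (u k \<bullet> u k)) * (e \<bullet> u k)"
      by (subst eq) (simp add: inner_add_right)
    then show ?thesis using e1 by simp
  qed
  ultimately show ?thesis using e1 by (intro exI[of _ e]) simp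
qed

lemma generic_all: "\<exists>d. \<forall>j\<in>J. d \<bullet> u j \<noteq> 0"
proof -
  have "\<exists>d. d \<bullet> 0 = 0 \<and> (\<forall>w\<in>u ` J. d \<bullet> w \<noteq> 0)"
  proof (rule generic)
    show "\<forall>w\<in>u ` J. \<exists>e. e \<bullet> 0 = 0 \<and> e \<bullet> w \<noteq> 0" using nz by (metis image_iff inner_eq_zero_iff inner_zero_right)
  qed (use finJ in auto)
  then show ?thesis by auto
qed

lemma generic_perp: assumes "k \<in> J" shows "\<exists>d. d \<bullet> u k = 0 \<and> (\<forall>j\<in>J - {k}. d \<bullet> u j \<noteq> 0)"
proof -
  have "\<exists>d. d \<bullet> u k = 0 \<and> (\<forall>w\<in>u ` (J - {k}). d \<bullet> w \<noteq> 0)"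
    by (rule generic) (use finJ proj_witness assms in auto)
  then show ?thesis by auto
qed

lemma pert_ex: "\<exists>e>0. sv a (x + e *\<^sub>R v) =
   (\<lambda>j. if j \<in> J then (if sv a x j \<noteq> 0 then sv a x j else sgn (u j \<bullet> v)) else 0)"
  using ev_ex[OF pert] by blast

lemma facet_exists: assumes k: "k \<in> J" shows "\<exists>s\<in>cov a. Zs s = {k}"
proof -
  define z where "z = (a k / (u k \<bullet> u k)) *\<^sub>R u k"
  have uz: "u k \<bullet> z = a k" using nz[OF k] by (simp add: z_def)
  obtain d where d: "d \<bullet> u k = 0" "\<forall>j\<in>J - {k}. d \<bullet> u j \<noteq> 0" using generic_perp[OF k] by blast
  obtain e where e: "sv a (z + e *\<^sub>R d) =
   (\<lambda>j. if j \<in> J then (if sv a z j \<noteq> 0 then sv a z j else sgn (u j \<bullet> d)) else 0)"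
    using pert_ex by blast
  have "Zs (sv a (z + e *\<^sub>R d)) = {k}"
  proof -
    have "sv a z k = 0" using uz k by (simp add: sv_def)
    moreover have "u k \<bullet> d = 0" using d by (simp add: inner_commute)
    moreover have "u j \<bullet> d \<noteq> 0" if "j \<in> J - {k}" for j using d that by (simp add: inner_commute)
    ultimately show ?thesis using k unfolding e Zs_def by (auto simp: sgn_eq_0_iff)
  qed
  then show ?thesis by (auto simp: cov_def)
qed

lemma flip_cov: assumes s: "s \<in> cov a" and Z: "Zs s = {k}" and c: "c = 1 \<or> c = -1"
  shows "s(k := c) \<in> cov a"
proof -
  obtain x where x: "sv a x = s" using s by (auto simp: cov_def)
  have k: "k \<in> J" "s k = 0" using Z by (auto simp: Zs_def)
  obtain e where e: "sv a (x + e *\<^sub>R (c *\<^sub>R u k)) =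
   (\<lambda>j. if j \<in> J then (if sv a x j \<noteq> 0 then sv a x j else sgn (u j \<bullet> (c *\<^sub>R u k))) else 0)"
    using pert_ex by blast
  have "sv a (x + e *\<^sub>R (c *\<^sub>R u k)) = s(k := c)"
  proof
    fix j
    show "sv a (x + e *\<^sub>R (c *\<^sub>R u k)) j = (s(k := c)) j"
    proof (cases "j = k")
      case True
      have "u k \<bullet> u k > 0" using nz[OF k(1)] by simp
      then have "sgn (u k \<bullet> (c *\<^sub>R u k)) = c" using c by (auto simp: sgn_mult)
      then show ?thesis using True k x e by simp
    next
      case False
      have "j \<in> J \<Longrightarrow> s j \<noteq> 0" using Z False by (auto simp: Zs_def)
      then show ?thesis using False e x cov_out[OF s, of j] by auto
    qed
  qed
  then show ?thesis by (metis cov_def rangeI)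
qed

lemma chamber_above: assumes t: "t \<in> cov a" "Zs t = {}" and r: "r \<in> cov a" "sle r t" "Zs r = {k}"
  shows "t = r(k := t k)" "t k = 1 \<or> t k = -1"
proof -
  have k: "k \<in> J" using r(3) by (auto simp: Zs_def)
  show "t = r(k := t k)"
  proof
    fix j show "t j = (r(k := t k)) j"
    proof (cases "j = k")
      case False
      show ?thesis
      proof (cases "j \<in> J")
        case True
        then have "r j \<noteq> 0" using r(3) False by (auto simp: Zs_def)
        then show ?thesis using r(2) False by (auto simp: sle_def)
      next
        case False2: False
        then show ?thesis using cov_out[OF t(1)] cov_out[OF r(1)] False by simp
      qed
    qed simp
  qed
  have "t k \<noteq> 0" using t(2) k by (auto simp: Zs_def)
  then show "t k = 1 \<or> t k = -1" using cov_vals[OF t(1), of k] by auto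
qed

lemma above0: assumes s: "s \<in> cov a" shows "\<exists>t\<in>cov a. Zs t = {} \<and> sle s t"
proof -
  obtain x where x: "sv a x = s" using s by (auto simp: cov_def)
  obtain d where d: "\<forall>j\<in>J. d \<bullet> u j \<noteq> 0" using generic_all by blast
  obtain e where e: "sv a (x + e *\<^sub>R d) =
   (\<lambda>j. if j \<in> J then (if sv a x j \<noteq> 0 then sv a x j else sgn (u j \<bullet> d)) else 0)"
    using pert_ex by blast
  have "Zs (sv a (x + e *\<^sub>R d)) = {}" using d unfolding e Zs_def
    by (auto simp: sgn_eq_0_iff inner_commute)
  moreover have "sle s (sv a (x + e *\<^sub>R d))" unfolding sle_def e
  proof (intro allI)
    fix j show "s j = 0 \<or> s j = (if j \<in> J then (if sv a x j \<noteq> 0 then sv a x j else sgn (u j \<bullet> d)) else 0)"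
      using x by (cases "j \<in> J") (auto simp: sv_def)
  qed
  ultimately show ?thesis by (auto simp: cov_def)
qed

lemma above: assumes s: "s \<in> cov a" and j0: "j0 \<in> J" "s j0 = 0" and c: "c = 1 \<or> c = -1"
  shows "\<exists>t\<in>cov a. Zs t = {} \<and> sle s t \<and> t j0 = c"
proof -
  obtain x where x: "sv a x = s" using s by (auto simp: cov_def)
  obtain e where e: "sv a (x + e *\<^sub>R (c *\<^sub>R u j0)) =
   (\<lambda>j. if j \<in> J then (if sv a x j \<noteq> 0 then sv a x j else sgn (u j \<bullet> (c *\<^sub>R u j0))) else 0)"
    using pert_ex by blast
  define s1 where "s1 = sv a (x + e *\<^sub>R (c *\<^sub>R u j0))"
  have s1c: "s1 \<in> cov a" by (simp add: s1_def cov_def)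
  have "u j0 \<bullet> u j0 > 0" using nz[OF j0(1)] by simp
  then have "sgn (u j0 \<bullet> (c *\<^sub>R u j0)) = c" using c by (auto simp: sgn_mult)
  moreover have "s1 j0 = sgn (u j0 \<bullet> (c *\<^sub>R u j0))" using j0 x unfolding s1_def e by simp
  ultimately have s1j: "s1 j0 = c" by simp
  have sl1: "sle s s1" unfolding sle_def s1_def e
  proof (intro allI)
    fix j show "s j = 0 \<or> s j = (if j \<in> J then (if sv a x j \<noteq> 0 then sv a x j else sgn (u j \<bullet> (c *\<^sub>R u j0))) else 0)"
      using x by (cases "j \<in> J") (auto simp: sv_def)
  qed
  obtain t where t: "t \<in> cov a" "Zs t = {}" "sle s1 t" using above0[OF s1c] by blast
  have "s1 j0 = 0 \<or> s1 j0 = t j0" using t(3) unfolding sle_def by blast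
  then have "t j0 = c" using s1j c by auto
  then show ?thesis using t sle_trans[OF sl1 t(3)] by blast
qed


lemma facet_sep: assumes t: "t \<in> cov a" "Zs t = {}" and t': "t' \<in> cov a" "Zs t' = {}" and ne: "t \<noteq> t'"
  shows "\<exists>k s. s \<in> cov a \<and> sle s t \<and> Zs s = {k} \<and> t' k = - t k"
proof -
  define Q where "Q = (\<lambda>K. {x. \<forall>j\<in>K. 0 \<le> t j * (u j \<bullet> x - a j)})"
  have tnz: "j \<in> J \<Longrightarrow> t j \<noteq> 0" for j using t(2) by (auto simp: Zs_def)
  have tpm: "j \<in> J \<Longrightarrow> t j = 1 \<or> t j = -1" for j using cov_pm[OF t(1)] tnz by blast
  have fcQ: "fc a t = Q J" using fc_eq_cf[OF t(1)] tnz by (auto simp: cf_def Q_def)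
  have Qanti: "K' \<subseteq> K \<Longrightarrow> Q K \<subseteq> Q K'" for K K' by (auto simp: Q_def)
  obtain K where K: "K \<subseteq> J \<and> Q K = Q J" and Kmin: "\<And>K'. K' \<subseteq> J \<and> Q K' = Q J \<Longrightarrow> card K \<le> card K'"
    using ex_has_least_nat[of "\<lambda>K. K \<subseteq> J \<and> Q K = Q J" J card] by blast
  have finK: "finite K" using K finJ finite_subset by blast
  obtain y where y: "sv a y = t'" using t' by (auto simp: cov_def)
  have "y \<notin> Q J"
  proof
    assume "y \<in> Q J"
    then have "sle t' t" using fcQ mem_fc[OF t(1)] y by auto
    moreover have "j \<in> J \<Longrightarrow> t' j \<noteq> 0" for j using t'(2) by (auto simp: Zs_def)
    ultimately have "t' = t" using cov_out[OF t(1)] cov_out[OF t'(1)] unfolding sle_def by (metis ext)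
    then show False using ne by simp
  qed
  then have "y \<notin> Q K" using K by simp
  then obtain k where kK: "k \<in> K" and yk: "t k * (u k \<bullet> y - a k) < 0" by (auto simp: Q_def not_le)
  have kJ: "k \<in> J" using kK K by blast
  have t'k: "t' k = - t k"
  proof -
    have "sgn (u k \<bullet> y - a k) = - t k" using tpm[OF kJ] yk by (auto simp: sgn_if mult_less_0_iff)
    then show ?thesis using y kJ by (auto simp: sv_def)
  qed
  have "Q (K - {k}) \<noteq> Q J"
  proof
    assume "Q (K - {k}) = Q J"
    then have "card K \<le> card (K - {k})" using Kmin K by blast
    moreover have "card (K - {k}) < card K" using finK kK by (metis card_Diff1_less)
    ultimately show False by simp
  qed
  moreover have "Q J \<subseteq> Q (K - {k})" using K Qanti[of "K - {k}" K] by auto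
  ultimately obtain w where w: "w \<in> Q (K - {k})" "w \<notin> Q K" by (metis K subset_antisym subsetI)
  have wk: "t k * (u k \<bullet> w - a k) < 0"
  proof (rule ccontr)
    assume "\<not> ?thesis"
    then have "w \<in> Q K" using w(1) kK by (auto simp: Q_def)
    then show False using w(2) by simp
  qed
  obtain x where x: "sv a x = t" using t(1) by (auto simp: cov_def)
  have xpos: "0 < t j * (u j \<bullet> x - a j)" if "j \<in> J" for j
  proof -
    have "sgn (u j \<bullet> x - a j) = t j" using x that by (auto simp: sv_def)
    then have "t j * (u j \<bullet> x - a j) = \<bar>u j \<bullet> x - a j\<bar>" using sgn_mul by metis
    moreover have "u j \<bullet> x - a j \<noteq> 0" using \<open>sgn (u j \<bullet> x - a j) = t j\<close> tnz[OF that] by auto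
    ultimately show ?thesis by simp
  qed
  define f where "f = (\<lambda>j y. t j * (u j \<bullet> y - a j))"
  define \<alpha> where "\<alpha> = f k x"
  define \<beta> where "\<beta> = f k w"
  have \<alpha>: "\<alpha> > 0" using xpos[OF kJ] by (simp add: \<alpha>_def f_def)
  have \<beta>: "\<beta> < 0" using wk by (simp add: \<beta>_def f_def)
  define l where "l = \<alpha> / (\<alpha> - \<beta>)"
  have l: "0 < l" "l < 1" using \<alpha> \<beta> by (auto simp: l_def field_simps)
  define z where "z = x + l *\<^sub>R (w - x)"
  have fz: "f j z = (1 - l) * f j x + l * f j w" for j
    by (simp add: f_def z_def inner_add_right inner_diff_right algebra_simps)
  have fkz: "f k z = 0"
  proof -
    have "f k z = (1 - l) * \<alpha> + l * \<beta>" using fz by (simp add: \<alpha>_def \<beta>_def)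
    also have "\<dots> = \<alpha> - l * (\<alpha> - \<beta>)" by (simp add: algebra_simps)
    also have "\<dots> = 0" using \<alpha> \<beta> by (simp add: l_def)
    finally show ?thesis .
  qed
  have fjz: "0 < f j z" if "j \<in> K - {k}" for j
  proof -
    have "0 < f j x" using xpos that K by (auto simp: f_def)
    moreover have "0 \<le> f j w" using w(1) that by (auto simp: Q_def f_def)
    ultimately show ?thesis using fz[of j] l by (simp add: add_pos_nonneg)
  qed
  obtain d where d: "d \<bullet> u k = 0" "\<forall>j\<in>J - {k}. d \<bullet> u j \<noteq> 0" using generic_perp[OF kJ] by blast
  obtain e where e: "sv a (z + e *\<^sub>R d) =
   (\<lambda>j. if j \<in> J then (if sv a z j \<noteq> 0 then sv a z j else sgn (u j \<bullet> d)) else 0)"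
    using pert_ex by blast
  define p where "p = z + e *\<^sub>R d"
  have svzk: "sv a z k = 0"
  proof -
    have "u k \<bullet> z - a k = 0" using fkz tnz[OF kJ] by (simp add: f_def)
    then show ?thesis using kJ by (simp add: sv_def)
  qed
  have Zp: "Zs (sv a p) = {k}"
  proof -
    have "u k \<bullet> d = 0" using d by (simp add: inner_commute)
    moreover have "u j \<bullet> d \<noteq> 0" if "j \<in> J - {k}" for j using d that by (simp add: inner_commute)
    ultimately show ?thesis using kJ svzk unfolding p_def e Zs_def by (auto simp: sgn_eq_0_iff)
  qed
  have "p \<in> Q K" unfolding Q_def
  proof (intro CollectI ballI)
    fix j assume j: "j \<in> K"
    show "0 \<le> t j * (u j \<bullet> p - a j)"
    proof (cases "j = k")
      case True
      have "u k \<bullet> p = u k \<bullet> z" using d by (simp add: p_def inner_add_right inner_commute)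
      then have "t k * (u k \<bullet> p - a k) = f k z" by (simp add: f_def)
      then show ?thesis using fkz True by (metis order_refl)
    next
      case False
      have jJ: "j \<in> J" using j K by blast
      have "0 < t j * (u j \<bullet> z - a j)" using fjz[of j] j False by (simp add: f_def)
      then have "sgn (u j \<bullet> z - a j) = t j" using sgn_pm[OF tpm[OF jJ]] by blast
      then have "sv a z j = t j" using jJ by (simp add: sv_def)
      then have "sv a p j = t j" using jJ tnz[OF jJ] unfolding p_def e by simp
      then have "sgn (u j \<bullet> p - a j) = t j" using jJ by (simp add: sv_def)
      then have "t j * (u j \<bullet> p - a j) = \<bar>u j \<bullet> p - a j\<bar>" using sgn_mul by metis
      then show ?thesis by simp
    qed
  qed
  then have "p \<in> fc a t" using K fcQ by simp
  then have "sle (sv a p) t" using mem_fc[OF t(1)] by simp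
  moreover have "sv a p \<in> cov a" by (simp add: cov_def)
  ultimately show ?thesis using Zp t'k by blast
qed

end

lemma polar_UNIV: "polar (UNIV :: 'a::euclidean_space set) = {0}"
proof -
  have "v = 0" if "v \<in> polar UNIV" for v :: 'a
  proof -
    have "v \<bullet> v \<le> 0" using that by (auto simp: polar_def)
    then show ?thesis by (metis inner_eq_zero_iff inner_ge_zero order_antisym)
  qed
  moreover have "(0::'a) \<in> polar UNIV" by (simp add: polar_def)
  ultimately show ?thesis by blast
qed

lemma proj_decomp:
  fixes v w :: "'a::euclidean_space"
  assumes "w \<noteq> 0"
  defines "p \<equiv> v - ((v \<bullet> w) / (w \<bullet> w)) *\<^sub>R w"
  shows "p \<bullet> w = 0" "v \<bullet> p = p \<bullet> p" "v = p + ((v \<bullet> w) / (w \<bullet> w)) *\<^sub>R w"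
proof -
  show pw: "p \<bullet> w = 0" using assms by (simp add: p_def inner_diff_left)
  show eq: "v = p + ((v \<bullet> w) / (w \<bullet> w)) *\<^sub>R w" by (simp add: p_def)
  have "v \<bullet> p = p \<bullet> p + ((v \<bullet> w) / (w \<bullet> w)) * (w \<bullet> p)"
    by (subst eq) (simp add: inner_add_left)
  then show "v \<bullet> p = p \<bullet> p" using pw by (simp add: inner_commute)
qed

lemma line_polar:
  fixes v w :: "'a::euclidean_space"
  assumes h: "\<And>d. w \<bullet> d = 0 \<Longrightarrow> v \<bullet> d \<le> 0"
  shows "\<exists>c. v = c *\<^sub>R w"
proof (cases "w = 0")
  case True
  then have "v \<bullet> v \<le> 0" using h by simp
  then have "v = 0" by (metis inner_eq_zero_iff inner_ge_zero order_antisym)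
  then show ?thesis using True by (intro exI[of _ 0]) simp
next
  case False
  define p where "p = v - ((v \<bullet> w) / (w \<bullet> w)) *\<^sub>R w"
  note pd = proj_decomp[OF False, of v, folded p_def]
  have "v \<bullet> p \<le> 0" using h pd(1) by (simp add: inner_commute)
  then have "p = 0" using pd(2) by (metis inner_eq_zero_iff inner_ge_zero order_antisym)
  then show ?thesis using pd(3) by auto
qed

lemma half_polar:
  fixes v w :: "'a::euclidean_space"
  assumes h: "\<And>d. 0 \<le> w \<bullet> d \<Longrightarrow> v \<bullet> d \<le> 0"
  shows "\<exists>c\<ge>0. v = (- c) *\<^sub>R w"
proof (cases "w = 0")
  case True
  then have "v \<bullet> v \<le> 0" using h by simp
  then have "v = 0" by (metis inner_eq_zero_iff inner_ge_zero order_antisym)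
  then show ?thesis using True by (intro exI[of _ 0]) simp
next
  case False
  define p where "p = v - ((v \<bullet> w) / (w \<bullet> w)) *\<^sub>R w"
  note pd = proj_decomp[OF False, of v, folded p_def]
  have "v \<bullet> p \<le> 0" using h pd(1) by (simp add: inner_commute)
  then have p0: "p = 0" using pd(2) by (metis inner_eq_zero_iff inner_ge_zero order_antisym)
  have "v \<bullet> w \<le> 0" using h[of w] by simp
  moreover have "w \<bullet> w > 0" using False by simp
  ultimately have "- ((v \<bullet> w) / (w \<bullet> w)) \<ge> 0" by (simp add: divide_nonpos_pos)
  moreover have "v = (- (- ((v \<bullet> w) / (w \<bullet> w)))) *\<^sub>R w" using pd(3) p0 by simp
  ultimately show ?thesis by blast
qed

context arr begin

lemma Tc_cham: "Zs t = {} \<Longrightarrow> Tc t t = UNIV"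
  by (auto simp: Tc_def Zs_def)

lemma Tc_mono: "Tc s r \<subseteq> Tc s s" by (auto simp: Tc_def)

lemma IntFan: assumes s: "s \<in> cov a" shows "\<Inter> (normal_fan (fc a s)) = polar (Tc s s)"
proof -
  have "polar (Tc s s) \<subseteq> polar (Tc s r)" for r using Tc_mono[of s r] by (auto simp: polar_def)
  then show ?thesis unfolding fan_fc[OF s] using sle_refl s by blast
qed

lemma u_polar: "j \<in> J \<Longrightarrow> s j = 0 \<Longrightarrow> u j \<in> polar (Tc s r)"
  by (auto simp: Tc_def polar_def inner_commute)

lemma negu_polar: "j \<in> J \<Longrightarrow> r j = 0 \<Longrightarrow> s j \<noteq> 0 \<Longrightarrow> (- s j) *\<^sub>R u j \<in> polar (Tc s r)"
  by (auto simp: Tc_def polar_def inner_commute)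

lemma single_polar: assumes "Zs s = {k}" "v \<in> polar (Tc s s)" shows "\<exists>c. v = c *\<^sub>R u k"
proof (rule line_polar)
  fix d assume "u k \<bullet> d = 0"
  then have "d \<in> Tc s s" using assms(1) by (auto simp: Tc_def Zs_def inner_commute)
  then show "v \<bullet> d \<le> 0" using assms(2) by (auto simp: polar_def)
qed

lemma polar_inj: assumes t: "t \<in> cov a" "Zs t = {}" and r: "r \<in> cov a" "sle r t"
  and r': "r' \<in> cov a" "sle r' t" and eq: "polar (Tc t r) = polar (Tc t r')"
  shows "Zs r \<subseteq> Zs r'"
proof
  fix j assume j: "j \<in> Zs r"
  then have jJ: "j \<in> J" and rj: "r j = 0" by (auto simp: Zs_def)
  have tj: "t j \<noteq> 0" using t(2) jJ by (auto simp: Zs_def)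
  have "(- t j) *\<^sub>R u j \<in> polar (Tc t r')" using negu_polar[of j r t, OF jJ rj tj] eq by simp
  show "j \<in> Zs r'"
  proof (rule ccontr)
    assume "j \<notin> Zs r'"
    then have r'j: "r' j \<noteq> 0" using jJ by (auto simp: Zs_def)
    then have r'jt: "r' j = t j" using r'(2) by (auto simp: sle_def)
    obtain y where y: "sv a y = r'" using r' by (auto simp: cov_def)
    have yf: "y \<in> fc a t" using mem_fc[OF t(1)] y r'(2) by simp
    obtain z where z: "sv a z = r" using r by (auto simp: cov_def)
    have zf: "z \<in> fc a t" using mem_fc[OF t(1)] z r(2) by simp
    have "(- t j) *\<^sub>R u j \<in> normal_cone (fc a t) y" using nc_fc[OF t(1) yf] y \<open>(- t j) *\<^sub>R u j \<in> polar (Tc t r')\<close> by simp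
    then have "((- t j) *\<^sub>R u j) \<bullet> z \<le> ((- t j) *\<^sub>R u j) \<bullet> y" using nc_iff[OF yf] zf by blast
    moreover have "sv a z j = 0" using z rj by simp
    then have "u j \<bullet> z = a j" using jJ by (simp add: sv_def sgn_eq_0_iff)
    ultimately have le: "t j * (u j \<bullet> y - a j) \<le> 0" by (simp add: algebra_simps)
    have "sv a y j = t j" using y r'jt by simp
    then have "sgn (u j \<bullet> y - a j) = t j" using jJ by (simp add: sv_def)
    then have "t j * (u j \<bullet> y - a j) = \<bar>u j \<bullet> y - a j\<bar>" using sgn_mul by metis
    moreover have "u j \<bullet> y - a j \<noteq> 0" using \<open>sgn (u j \<bullet> y - a j) = t j\<close> tj by auto
    ultimately show False using le by simp
  qed
qed

lemma sle_Zs_eq: assumes "sle r t" "sle r' t" "Zs r = Zs r'" "r \<in> cov a" "r' \<in> cov a"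
  shows "r = r'"
proof
  fix j show "r j = r' j"
  proof (cases "j \<in> J")
    case True
    show ?thesis
    proof (cases "r j = 0")
      case z: True
      then have "r' j = 0" using assms(3) True by (auto simp: Zs_def)
      then show ?thesis using z by simp
    next
      case False
      then have "r' j \<noteq> 0" using assms(3) True by (auto simp: Zs_def)
      then show ?thesis using False assms(1,2) unfolding sle_def by metis
    qed
  next
    case False then show ?thesis using cov_out[OF assms(4)] cov_out[OF assms(5)] by simp
  qed
qed

lemma card_fan: assumes t: "t \<in> cov a" "Zs t = {}"
  shows "card {r \<in> cov a. sle r t} = card (normal_fan (fc a t))"
proof -
  have "inj_on (\<lambda>r. polar (Tc t r)) {r \<in> cov a. sle r t}"
  proof (rule inj_onI)
    fix r r' assume "r \<in> {r \<in> cov a. sle r t}" "r' \<in> {r \<in> cov a. sle r t}" "polar (Tc t r) = polar (Tc t r')"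
    then show "r = r'" using polar_inj[OF t] sle_Zs_eq by (metis (no_types, lifting) mem_Collect_eq subset_antisym)
  qed
  moreover have "normal_fan (fc a t) = (\<lambda>r. polar (Tc t r)) ` {r \<in> cov a. sle r t}"
    using fan_fc[OF t(1)] by auto
  ultimately show ?thesis by (simp add: card_image)
qed

end


context arr begin
lemma cham_polar: assumes "s \<in> cov a" shows "Zs s = {} \<longleftrightarrow> polar (Tc s s) = {0}"
proof
  assume "Zs s = {}" then show "polar (Tc s s) = {0}" using Tc_cham polar_UNIV by simp
next
  assume h: "polar (Tc s s) = {0}"
  show "Zs s = {}"
  proof (rule ccontr)
    assume "Zs s \<noteq> {}"
    then obtain j where "j \<in> J" "s j = 0" by (auto simp: Zs_def)
    then have "u j \<in> polar (Tc s s)" by (rule u_polar)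
    then show False using h nz \<open>j \<in> J\<close> by auto
  qed
qed
end

locale arr2 = arr u J for u :: "nat \<Rightarrow> 'a::euclidean_space" and J +
  fixes a b :: "nat \<Rightarrow> real" and \<Psi> :: "'a set \<Rightarrow> 'a set"
  assumes bijP: "bij_betw \<Psi> (fc a ` cov a) (fc b ` cov b)"
    and monoP: "\<And>F G. F \<in> fc a ` cov a \<Longrightarrow> G \<in> fc a ` cov a \<Longrightarrow> F \<subseteq> G \<Longrightarrow> \<Psi> F \<subseteq> \<Psi> G"
    and fanP: "\<And>F. F \<in> fc a ` cov a \<Longrightarrow> normal_fan F = normal_fan (\<Psi> F)"
begin

definition pi where "pi s = (THE r. r \<in> cov b \<and> \<Psi> (fc a s) = fc b r)"

lemma pi_prop: assumes s: "s \<in> cov a" shows "pi s \<in> cov b" "\<Psi> (fc a s) = fc b (pi s)"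
proof -
  have "\<Psi> (fc a s) \<in> fc b ` cov b" using bijP s by (auto simp: bij_betw_def)
  then obtain r where r: "r \<in> cov b" "\<Psi> (fc a s) = fc b r" by blast
  have "\<exists>!r. r \<in> cov b \<and> \<Psi> (fc a s) = fc b r"
    using r fc_inj[of _ b] by metis
  then have "pi s \<in> cov b \<and> \<Psi> (fc a s) = fc b (pi s)" unfolding pi_def by (rule theI')
  then show "pi s \<in> cov b" "\<Psi> (fc a s) = fc b (pi s)" by auto
qed

lemma pi_bij: "bij_betw pi (cov a) (cov b)"
proof -
  have "inj_on pi (cov a)"
  proof (rule inj_onI)
    fix s s' assume s: "s \<in> cov a" and s': "s' \<in> cov a" and e: "pi s = pi s'"
    then have "\<Psi> (fc a s) = \<Psi> (fc a s')" using pi_prop by simp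
    then have "fc a s = fc a s'" using bijP s s' by (auto simp: bij_betw_def inj_on_def)
    then show "s = s'" using fc_inj s s' by blast
  qed
  moreover have "pi ` cov a = cov b"
  proof
    show "pi ` cov a \<subseteq> cov b" using pi_prop by auto
  next
    show "cov b \<subseteq> pi ` cov a"
    proof
      fix r assume r: "r \<in> cov b"
      then have "fc b r \<in> \<Psi> ` (fc a ` cov a)" using bijP by (auto simp: bij_betw_def)
      then obtain s where s: "s \<in> cov a" "fc b r = \<Psi> (fc a s)" by blast
      then have "fc b r = fc b (pi s)" using pi_prop by simp
      then have "r = pi s" using fc_inj r pi_prop(1)[OF s(1)] by blast
      then show "r \<in> pi ` cov a" using s by blast
    qed
  qed
  ultimately show ?thesis by (simp add: bij_betw_def)
qed

lemma pi_cov: "s \<in> cov a \<Longrightarrow> pi s \<in> cov b" using pi_prop by blast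

lemma pi_inj: "s \<in> cov a \<Longrightarrow> s' \<in> cov a \<Longrightarrow> pi s = pi s' \<Longrightarrow> s = s'"
  using pi_bij by (auto simp: bij_betw_def inj_on_def)

lemma pi_mono: assumes "s \<in> cov a" "r \<in> cov a" "sle s r" shows "sle (pi s) (pi r)"
proof -
  have "fc a s \<subseteq> fc a r" using fc_sub assms by blast
  then have "\<Psi> (fc a s) \<subseteq> \<Psi> (fc a r)" using monoP assms by blast
  then have "fc b (pi s) \<subseteq> fc b (pi r)" using pi_prop assms by simp
  then show ?thesis using fc_sub pi_cov assms by blast
qed

lemma pi_fan: "s \<in> cov a \<Longrightarrow> normal_fan (fc a s) = normal_fan (fc b (pi s))"
  using fanP pi_prop by (metis imageI)

lemma pi_polar: assumes "s \<in> cov a" shows "polar (Tc s s) = polar (Tc (pi s) (pi s))"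
  using IntFan[OF assms] IntFan[OF pi_cov[OF assms]] pi_fan[OF assms] by simp

lemma Q1: assumes "s \<in> cov a" shows "Zs (pi s) = {} \<longleftrightarrow> Zs s = {}"
  using cham_polar[OF assms] cham_polar[OF pi_cov[OF assms]] pi_polar[OF assms] by simp

lemma Q2: assumes s: "s \<in> cov a" and Z: "Zs s = {k}" shows "Zs (pi s) = {k}"
proof -
  have ne: "Zs (pi s) \<noteq> {}" using Q1[OF s] Z by simp
  have sub: "Zs (pi s) \<subseteq> {k}"
  proof
    fix j assume j: "j \<in> Zs (pi s)"
    then have "u j \<in> polar (Tc (pi s) (pi s))" by (intro u_polar) (auto simp: Zs_def)
    then have "u j \<in> polar (Tc s s)" using pi_polar[OF s] by simp
    then obtain c where c: "u j = c *\<^sub>R u k" using single_polar[OF Z] by blast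
    have "j \<in> J" "k \<in> J" using j Z by (auto simp: Zs_def)
    then show "j \<in> {k}" using np c by blast
  qed
  show ?thesis using ne sub by blast
qed

definition D where "D t = {j\<in>J. pi t j \<noteq> t j}"

lemma upd_cham: assumes "Zs s = {k}" "c \<noteq> 0" shows "Zs (s(k := c)) = {}"
  using assms by (auto simp: Zs_def)

lemma flip_D: assumes s: "s \<in> cov a" and Z: "Zs s = {k}"
  shows "D (s(k := 1)) = D (s(k := -1))"
proof -
  define t1 where "t1 = s(k := 1)"
  define t2 where "t2 = s(k := -1)"
  have kJ: "k \<in> J" and sk: "s k = 0" using Z by (auto simp: Zs_def)
  have t1: "t1 \<in> cov a" "Zs t1 = {}" "sle s t1"
    using flip_cov[OF s Z] upd_cham[OF Z] sk by (auto simp: t1_def sle_def)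
  have t2: "t2 \<in> cov a" "Zs t2 = {}" "sle s t2"
    using flip_cov[OF s Z] upd_cham[OF Z] sk by (auto simp: t2_def sle_def)
  have ZP: "Zs (pi s) = {k}" using Q2[OF s Z] .
  have p1: "pi t1 = (pi s)(k := pi t1 k)" "pi t1 k = 1 \<or> pi t1 k = -1"
    using chamber_above[OF pi_cov[OF t1(1)] _ pi_cov[OF s] pi_mono[OF s t1(1) t1(3)] ZP] Q1[OF t1(1)] t1(2)
    by auto
  have p2: "pi t2 = (pi s)(k := pi t2 k)" "pi t2 k = 1 \<or> pi t2 k = -1"
    using chamber_above[OF pi_cov[OF t2(1)] _ pi_cov[OF s] pi_mono[OF s t2(1) t2(3)] ZP] Q1[OF t2(1)] t2(2)
    by auto
  have "t1 \<noteq> t2" by (auto simp: t1_def t2_def dest: fun_cong[of _ _ k])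
  then have "pi t1 \<noteq> pi t2" using pi_inj t1(1) t2(1) by blast
  then have "pi t1 k \<noteq> pi t2 k" using p1(1) p2(1) by metis
  then have opp: "pi t1 k = - pi t2 k" using p1(2) p2(2) by auto
  have "j \<in> D t1 \<longleftrightarrow> j \<in> D t2" for j
  proof (cases "j = k")
    case True
    then show ?thesis using opp p1(2) p2(2) kJ by (auto simp: D_def t1_def t2_def)
  next
    case False
    have "pi t1 j = pi t2 j" using p1(1) p2(1) False by (metis fun_upd_other)
    then show ?thesis using False by (simp add: D_def t1_def t2_def)
  qed
  then show ?thesis unfolding t1_def t2_def by blast
qed

lemma sign_detect: assumes t: "t \<in> cov a" "Zs t = {}" and s: "s \<in> cov a" "sle s t" "Zs s = {k}"
  shows "pi t k = t k"
proof -
  define t' where "t' = pi t"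
  define s' where "s' = pi s"
  have t': "t' \<in> cov b" "Zs t' = {}" using pi_cov[OF t(1)] Q1[OF t(1)] t(2) by (auto simp: t'_def)
  have s': "s' \<in> cov b" "sle s' t'" "Zs s' = {k}"
    using pi_cov[OF s(1)] pi_mono[OF s(1) t(1) s(2)] Q2[OF s(1) s(3)] by (auto simp: s'_def t'_def)
  have kJ: "k \<in> J" using s(3) by (auto simp: Zs_def)
  have t'k: "t' k \<noteq> 0" "t k \<noteq> 0" using t'(2) t(2) kJ by (auto simp: Zs_def)
  have t'pm: "t' k = 1 \<or> t' k = -1" using cov_pm[OF t'(1) kJ t'k(1)] .
  have tpm: "t k = 1 \<or> t k = -1" using cov_pm[OF t(1) kJ t'k(2)] .
  define E where "E = polar (Tc t' s')"
  have "E \<in> normal_fan (fc b t')" unfolding E_def fan_fc[OF t'(1)] using s' by blast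
  then have "E \<in> normal_fan (fc a t)" using pi_fan[OF t(1)] by (simp add: t'_def)
  then obtain r where r: "r \<in> cov a" "sle r t" "E = polar (Tc t r)" unfolding fan_fc[OF t(1)] by blast
  have s'k: "s' k = 0" using s'(3) by (auto simp: Zs_def)
  have memE: "\<forall>d. 0 \<le> (t' k *\<^sub>R u k) \<bullet> d \<longrightarrow> v \<bullet> d \<le> 0" if "v \<in> E" for v
  proof (intro allI impI)
    fix d assume d: "0 \<le> (t' k *\<^sub>R u k) \<bullet> d"
    have "d \<in> Tc t' s'" unfolding Tc_def
    proof (intro CollectI ballI conjI impI)
      fix j assume j: "j \<in> J"
      { assume "t' j = 0" then show "d \<bullet> u j = 0" using t'(2) j by (auto simp: Zs_def) }
      { assume h: "s' j = 0 \<and> t' j \<noteq> 0"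
        then have "j = k" using s'(3) j by (auto simp: Zs_def)
        then show "0 \<le> t' j * (d \<bullet> u j)" using d by (simp add: inner_commute) }
    qed
    then show "v \<bullet> d \<le> 0" using that by (auto simp: E_def polar_def)
  qed
  have "Zs r \<noteq> {}"
  proof
    assume Zr: "Zs r = {}"
    have "r = t" using sle_Zs_eq[OF r(2) sle_refl Zr[unfolded t(2)[symmetric]] r(1) t(1)] .
    then have "E = {0}" using r(3) Tc_cham[OF t(2)] polar_UNIV by simp
    moreover have "(- t' k) *\<^sub>R u k \<in> E" unfolding E_def using negu_polar[of k s' t', OF kJ s'k t'k(1)] .
    ultimately show False using t'k(1) nz[OF kJ] by simp
  qed
  then obtain j where j: "j \<in> J" "r j = 0" by (auto simp: Zs_def)
  have tj: "t j \<noteq> 0" using t(2) j by (auto simp: Zs_def)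
  have "(- t j) *\<^sub>R u j \<in> E" using r(3) negu_polar[of j r t, OF j tj] by simp
  then obtain c where c: "c \<ge> 0" "(- t j) *\<^sub>R u j = (- c) *\<^sub>R (t' k *\<^sub>R u k)"
    using half_polar[of "t' k *\<^sub>R u k" "(- t j) *\<^sub>R u j"] memE by blast
  then have e1: "t j *\<^sub>R u j = (c * t' k) *\<^sub>R u k" by simp
  have "u j = (1 / t j) *\<^sub>R (t j *\<^sub>R u j)" using tj by simp
  also have "\<dots> = ((c * t' k) / t j) *\<^sub>R u k" using e1 by simp
  finally have c2: "u j = ((c * t' k) / t j) *\<^sub>R u k" .
  have "j = k" using np[OF j(1) kJ] c2 by blast
  then have "(t k - c * t' k) *\<^sub>R u k = 0" using c(2) by (simp add: algebra_simps)
  then have "t k = c * t' k" using nz[OF kJ] by simp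
  then show ?thesis using tpm t'pm c(1) by (auto simp: t'_def)
qed


lemma walk: "t \<in> cov a \<Longrightarrow> Zs t = {} \<Longrightarrow> t' \<in> cov a \<Longrightarrow> Zs t' = {} \<Longrightarrow>
  card {j\<in>J. t j \<noteq> t' j} = n \<Longrightarrow> D t = D t'"
proof (induction n arbitrary: t rule: less_induct)
  case (less n t)
  show ?case
  proof (cases "t = t'")
    case True then show ?thesis by simp
  next
    case False
    obtain k s where ks: "s \<in> cov a" "sle s t" "Zs s = {k}" "t' k = - t k"
      using facet_sep[OF less.prems(1,2,3,4) False] by blast
    have kJ: "k \<in> J" using ks(3) by (auto simp: Zs_def)
    have ta: "t = s(k := t k)" "t k = 1 \<or> t k = -1"
      using chamber_above[OF less.prems(1,2) ks(1,2,3)] by auto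
    define t'' where "t'' = s(k := - t k)"
    have t'': "t'' \<in> cov a" "Zs t'' = {}"
      using flip_cov[OF ks(1,3), of "- t k"] upd_cham[OF ks(3), of "- t k"] ta(2) by (auto simp: t''_def)
    have Dt: "D t = D t''"
      using flip_D[OF ks(1,3)] ta by (auto simp: t''_def)
    have sep: "{j\<in>J. t'' j \<noteq> t' j} = {j\<in>J. t j \<noteq> t' j} - {k}"
    proof (intro set_eqI iffI)
      fix j assume "j \<in> {j\<in>J. t'' j \<noteq> t' j}"
      then show "j \<in> {j\<in>J. t j \<noteq> t' j} - {k}" using ks(4) ta(1)
        by (auto simp: t''_def) (metis fun_upd_other)
    next
      fix j assume "j \<in> {j\<in>J. t j \<noteq> t' j} - {k}"
      then show "j \<in> {j\<in>J. t'' j \<noteq> t' j}" using ta(1)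
        by (auto simp: t''_def) (metis fun_upd_other)
    qed
    have kin: "k \<in> {j\<in>J. t j \<noteq> t' j}" using kJ ks(4) ta(2) by auto
    have "card {j\<in>J. t'' j \<noteq> t' j} < n"
      unfolding sep less.prems(5)[symmetric] using kin finJ by (intro card_Diff1_less) auto
    then have "D t'' = D t'" using less.IH t'' less.prems(3,4) by blast
    then show ?thesis using Dt by simp
  qed
qed

lemma pi_cham: assumes t: "t \<in> cov a" "Zs t = {}" shows "pi t = t"
proof -
  have "k \<notin> D t" if kJ: "k \<in> J" for k
  proof -
    obtain s where s: "s \<in> cov a" "Zs s = {k}" using facet_exists[OF kJ] by blast
    define t1 where "t1 = s(k := 1)"
    have sk: "s k = 0" using s(2) by (auto simp: Zs_def)
    have t1: "t1 \<in> cov a" "Zs t1 = {}" "sle s t1"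
      using flip_cov[OF s, of 1] upd_cham[OF s(2), of 1] sk by (auto simp: t1_def sle_def)
    have "pi t1 k = t1 k" using sign_detect[OF t1(1,2) s(1) t1(3) s(2)] .
    then have "k \<notin> D t1" by (simp add: D_def)
    moreover have "D t1 = D t" using walk[OF t1(1,2) t] by blast
    ultimately show ?thesis by simp
  qed
  then have "pi t j = t j" for j
    using cov_out[OF pi_cov[OF t(1)], of j] cov_out[OF t(1), of j] by (cases "j \<in> J") (auto simp: D_def)
  then show ?thesis by blast
qed

lemma cham_eq: "{t\<in>cov b. Zs t = {}} = {t\<in>cov a. Zs t = {}}"
proof
  show "{t\<in>cov b. Zs t = {}} \<subseteq> {t\<in>cov a. Zs t = {}}"
  proof
    fix t assume t: "t \<in> {t\<in>cov b. Zs t = {}}"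
    then obtain s where s: "s \<in> cov a" "t = pi s" using pi_bij by (auto simp: bij_betw_def)
    then have "Zs s = {}" using Q1 t by auto
    then have "pi s = s" using pi_cham s(1) by blast
    then show "t \<in> {t\<in>cov a. Zs t = {}}" using s t by auto
  qed
next
  show "{t\<in>cov a. Zs t = {}} \<subseteq> {t\<in>cov b. Zs t = {}}"
    using pi_cham pi_cov by (metis (mono_tags, lifting) mem_Collect_eq subsetI)
qed

lemma meet: assumes s: "s \<in> cov a" and r: "r \<in> cov b"
  and eq: "{t\<in>cov a. Zs t = {} \<and> sle s t} = {t\<in>cov a. Zs t = {} \<and> sle r t}"
  shows "s = r"
proof
  fix j show "s j = r j"
  proof (cases "j \<in> J")
    case False then show ?thesis using cov_out[OF s] cov_out[OF r] by simp
  next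
    case jJ: True
    show ?thesis
    proof (cases "s j = 0")
      case True
      obtain t1 where t1: "t1 \<in> cov a" "Zs t1 = {}" "sle s t1" "t1 j = 1" using above[OF s jJ True, of 1] by auto
      obtain t2 where t2: "t2 \<in> cov a" "Zs t2 = {}" "sle s t2" "t2 j = -1" using above[OF s jJ True, of "-1"] by auto
      have "sle r t1" "sle r t2" using eq t1 t2 by blast+
      then have "r j = 0" using t1(4) t2(4) unfolding sle_def by (metis one_neq_neg_one)
      then show ?thesis using True by simp
    next
      case False
      have rj: "r j \<noteq> 0"
      proof
        assume rj: "r j = 0"
        have "- s j = 1 \<or> - s j = -1" using cov_pm[OF s jJ False] by auto
        then obtain t where t: "t \<in> cov b" "Zs t = {}" "sle r t" "t j = - s j" using above[OF r jJ rj] by blast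
        then have "t \<in> {t\<in>cov a. Zs t = {} \<and> sle r t}" using cham_eq by blast
        then have "sle s t" using eq by blast
        then show False using t(4) False unfolding sle_def by (metis add.inverse_neutral equal_neg_zero)
      qed
      obtain t where t: "t \<in> cov a" "Zs t = {}" "sle s t" using above0[OF s] by blast
      then have "sle r t" using eq by blast
      then show ?thesis using t(3) False rj unfolding sle_def by metis
    qed
  qed
qed

lemma double_count:
  assumes "finite X" "finite Y"
  shows "(\<Sum>x\<in>X. card {y\<in>Y. R x y}) = (\<Sum>y\<in>Y. card {x\<in>X. R x y})"
proof -
  have "(\<Sum>x\<in>X. card {y\<in>Y. R x y}) = (\<Sum>x\<in>X. \<Sum>y\<in>Y. if R x y then 1 else 0)"
    using assms by (simp add: sum.inter_filter[symmetric])
  also have "\<dots> = (\<Sum>y\<in>Y. \<Sum>x\<in>X. if R x y then 1 else 0)" by (rule sum.swap)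
  also have "\<dots> = (\<Sum>y\<in>Y. card {x\<in>X. R x y})"
    using assms by (simp add: sum.inter_filter[symmetric])
  finally show ?thesis .
qed

lemma cov_eq: "cov a = cov b"
proof -
  define Ch where "Ch = {t\<in>cov a. Zs t = {}}"
  have finCh: "finite Ch" using finite_cov by (simp add: Ch_def)
  define A where "A = (\<lambda>s. {t\<in>Ch. sle s t})"
  have sub: "A s \<subseteq> A (pi s)" if s: "s \<in> cov a" for s
  proof
    fix t assume "t \<in> A s"
    then have t: "t \<in> cov a" "Zs t = {}" "sle s t" by (auto simp: A_def Ch_def)
    have "sle (pi s) (pi t)" using pi_mono[OF s t(1) t(3)] .
    then show "t \<in> A (pi s)" using pi_cham[OF t(1,2)] t by (auto simp: A_def Ch_def)
  qed
  have c1: "(\<Sum>s\<in>cov a. card (A s)) = (\<Sum>t\<in>Ch. card {s\<in>cov a. sle s t})"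
    unfolding A_def by (rule double_count[OF finite_cov finCh])
  have c2: "card {s\<in>cov a. sle s t} = card {r\<in>cov b. sle r t}" if t: "t \<in> Ch" for t
  proof -
    have ta: "t \<in> cov a" "Zs t = {}" using t by (auto simp: Ch_def)
    have tb: "t \<in> cov b" using ta cham_eq by blast
    have "card {s\<in>cov a. sle s t} = card (normal_fan (fc a t))" using card_fan[OF ta] .
    also have "\<dots> = card (normal_fan (fc b t))" using pi_fan[OF ta(1)] pi_cham[OF ta] by simp
    also have "\<dots> = card {r\<in>cov b. sle r t}" using card_fan[OF tb ta(2)] by simp
    finally show ?thesis .
  qed
  have c3: "(\<Sum>t\<in>Ch. card {r\<in>cov b. sle r t}) = (\<Sum>r\<in>cov b. card (A r))"
    unfolding A_def by (rule double_count[OF finite_cov finCh, symmetric])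
  have c4: "(\<Sum>r\<in>cov b. card (A r)) = (\<Sum>s\<in>cov a. card (A (pi s)))"
    using sum.reindex_bij_betw[OF pi_bij, of "\<lambda>r. card (A r)"] by simp
  have tot: "(\<Sum>s\<in>cov a. card (A s)) = (\<Sum>s\<in>cov a. card (A (pi s)))"
    using c1 c2 c3 c4 by simp
  have le: "card (A s) \<le> card (A (pi s))" if "s \<in> cov a" for s
    using sub[OF that] finCh by (intro card_mono) (auto simp: A_def)
  have eqA: "A s = A (pi s)" if s: "s \<in> cov a" for s
  proof -
    have "card (A s) = card (A (pi s))"
      using sum_mono_inv[OF tot le s finite_cov] by simp
    then show ?thesis using sub[OF s] finCh by (intro card_subset_eq) (auto simp: A_def)
  qed
  have pis: "pi s = s" if s: "s \<in> cov a" for s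
    using meet[OF s pi_cov[OF s]] eqA[OF s] by (auto simp: A_def Ch_def)
  show ?thesis using pi_bij pis by (auto simp: bij_betw_def image_def)
qed

end
theorem mainTheorem17:
  fixes u :: "nat \<Rightarrow> 'a::euclidean_space" and m :: nat and a b :: "nat \<Rightarrow> real"
  assumes nonzero: "\<forall>i<m. u i \<noteq> 0"
    and nonparallel: "\<forall>i<m. \<forall>j<m. i \<noteq> j \<longrightarrow> \<not> (\<exists>c::real. u i = c *\<^sub>R u j)"
    and equiv: "arr_normally_equivalent (arrangement m u a) (arrangement m u b)"
    and i: "i < m"
  shows "arr_normally_equivalent (arrangement m u a - {(u i, a i)})
                                 (arrangement m u b - {(u i, b i)})"
proof -
  have A1: "arr u {..<m}"
    by (rule arr.intro) (use nonzero nonparallel in auto)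
  have A2: "arr u ({..<m} - {i})"
    by (rule arr.intro) (use nonzero nonparallel in auto)
  obtain \<Psi> where P: "bij_betw \<Psi> (arr_faces (arrangement m u a)) (arr_faces (arrangement m u b))"
    "\<forall>F\<in>arr_faces (arrangement m u a). \<forall>G\<in>arr_faces (arrangement m u a). F \<subseteq> G \<longrightarrow> \<Psi> F \<subseteq> \<Psi> G"
    "\<forall>F\<in>arr_faces (arrangement m u a). normally_equivalent F (\<Psi> F)"
    using equiv unfolding arr_normally_equivalent_def by blast
  have fa: "arr_faces (arrangement m u c) = arr.fc u {..<m} c ` arr.cov u {..<m} c" for c
    unfolding arrangement_def using arr.arr_faces_eq[OF A1] by blast
  have P1: "bij_betw \<Psi> (arr.fc u {..<m} a ` arr.cov u {..<m} a) (arr.fc u {..<m} b ` arr.cov u {..<m} b)"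
    using P(1) unfolding fa .
  have P2: "\<And>F G. F \<in> arr.fc u {..<m} a ` arr.cov u {..<m} a \<Longrightarrow> G \<in> arr.fc u {..<m} a ` arr.cov u {..<m} a
     \<Longrightarrow> F \<subseteq> G \<Longrightarrow> \<Psi> F \<subseteq> \<Psi> G"
    using P(2) unfolding fa by blast
  have P3: "\<And>F. F \<in> arr.fc u {..<m} a ` arr.cov u {..<m} a \<Longrightarrow> normal_fan F = normal_fan (\<Psi> F)"
    using P(3) unfolding fa normally_equivalent_def by blast
  have "arr2 u {..<m} a b \<Psi>"
    by (rule arr2.intro[OF A1 arr2_axioms.intro[OF P1 P2 P3]])
  then have ceq: "arr.cov u {..<m} a = arr.cov u {..<m} b" by (rule arr2.cov_eq)
  define R where "R = (\<lambda>s::nat \<Rightarrow> real. \<lambda>j. if j \<in> {..<m} - {i} then s j else 0)"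
  have svR: "arr.sv u ({..<m} - {i}) c = (\<lambda>x. R (arr.sv u {..<m} c x))" for c
    unfolding arr.sv_def[OF A2] arr.sv_def[OF A1] R_def by (intro ext) auto
  have covR: "arr.cov u ({..<m} - {i}) c = R ` arr.cov u {..<m} c" for c
    unfolding arr.cov_def[OF A2] arr.cov_def[OF A1] svR by auto
  have ceq2: "arr.cov u ({..<m} - {i}) a = arr.cov u ({..<m} - {i}) b"
    using covR ceq by simp
  have tr: "arr_normally_equivalent ((\<lambda>j. (u j, a j)) ` ({..<m} - {i})) ((\<lambda>j. (u j, b j)) ` ({..<m} - {i}))"
    by (rule arr.transfer[OF A2 ceq2])
  have img: "arrangement m u c - {(u i, c i)} = (\<lambda>j. (u j, c j)) ` ({..<m} - {i})" for c :: "nat \<Rightarrow> real"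
  proof -
    have "u j \<noteq> u i" if "j < m" "j \<noteq> i" for j
    proof
      assume "u j = u i"
      then have "u j = 1 *\<^sub>R u i" by simp
      moreover have "\<not> (\<exists>c::real. u j = c *\<^sub>R u i)" using nonparallel that i by blast
      ultimately show False by blast
    qed
    then show ?thesis unfolding arrangement_def by auto
  qed
  show ?thesis using tr img by simp
qed


end
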